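(* Algorithm SOMA has a speed-up bound of $4/3$: every dual-criticality implicit-deadline sporadic task system that is MC-schedulable by some scheduling algorithm on $m$ unit-speed processors is declared schedulable (success) by SOMA on $m$ processors each of speed $4/3$.
   Context: Task system $\tau$ on $m$ identical processors; each task $\tau_i$ has period/deadline $T_i>0$, criticality in $\{LO,HI\}$, WCETs $C_i^L\le C_i^H$ ($=$ for LO-tasks), $u_i^L=C_i^L/T_i\le1$, $u_i^H=C_i^H/T_i\le1$; $\tau_L$, $\tau_H$ the LO- and HI-tasks, $n_H=|\tau_H|$. The system starts in LO-mode and switches to HI-mode the first time a HI-job of $\tau_i$ executes $C_i^L$ units without completing; LO-jobs are then dropped. MC-schedulable: every job receives $C_i^L$ by its deadline in LO-mode and every HI-job receives $C_i^H$ by its deadline in HI-mode. A multi-rate assignment consists of $\theta_i^L$ ($\tau_i\in\tau$), $\theta_{i,j}^H$, $\theta_i^H$ ($\tau_i\in\tau_H$, $1\le j\le n_H$) and $w_j$ ($1\le j\le n_H$). Given indices $k_i\in\{1,\dots,n_H+1\}$, with $R_i=\theta_{i,k_i}^H$ if $k_i\le n_H$ and $R_i=\theta_i^H$ otherwise and $\theta_{i,n_H+1}^H:=\theta_i^H$, the conditions are: (S1) $\theta_i^L\ge u_i^L$ for all $\tau_i\in\tau$; (S3) $\sum_{\tau_H}\theta_{i,j}^H\le m$ for all $j$ and $\sum_{\tau_H}\theta_i^H\le m$; (S4) for all $\tau_i\in\tau_H$: $\sum_{j<k_i}\theta_{i,j}^Hw_j+R_i(T_i-C_i^L/\theta_i^L-\sum_{j<k_i}w_j)\ge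 C_i^H-C_i^L$, $\theta_i^L\le\theta_{i,j}^H$ for $k_i\le j\le n_H$, $\theta_i^L\le\theta_i^H$; (S5) for all $\tau_i\in\tau_H$: $\sum_{j<k_i}\theta_{i,j}^Hw_j\ge u_i^H\sum_{j<k_i}w_j$, $\theta_{i,j}^H\le\theta_{i,j+1}^H$ for $1\le j<k_i$, $\theta_{i,j}^H\ge u_i^H$ for $k_i\le j\le n_H$, $\theta_i^H\ge u_i^H$. Algorithm SOMA: (1) set $\theta_i^L=u_i^L$ for every $\tau_i\in\tau_L$; (2) index the HI-tasks $1,\dots,n_H$ in increasing order of $T_i-C_i^L/u_i^H$ and set $k_i=i$; (3) solve the optimization problem: minimize $\sum_{\tau_i\in\tau_H}\theta_i^L$ subject to (S1), (S3), (S4), (S5) with these fixed $k_i$, together with $\theta_{i,j}^H\le1$, $\theta_i^H\le1$ for all $i,j$ and $w_j\ge0$ for all $j$; (4) if an optimal assignment is returned and $\sum_{\tau_i\in\tau}\theta_i^L\le m$, declare success; otherwise declare failure. On processors of speed $s$, this is applied with all execution times $C_i^L,C_i^H$ divided by $s$. *)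

theory Defs
  imports "HOL-Analysis.Analysis"
begin

datatype crit = LO | HI

text \<open>Tasks are indexed by elements of a finite set tau.  A job is a pair (i, r):
  task index i and release time r; its deadline is r + T i.\<close>

definition legal_arrivals :: "'a set \<Rightarrow> ('a \<Rightarrow> real) \<Rightarrow> ('a \<Rightarrow> real set) \<Rightarrow> bool" where
  "legal_arrivals tau T R \<longleftrightarrow>
     (\<forall>i. R i \<subseteq> {0..}) \<and> (\<forall>i. i \<notin> tau \<longrightarrow> R i = {}) \<and>
     (\<forall>i\<in>tau. \<forall>r\<in>R i. \<forall>r'\<in>R i. r \<noteq> r' \<longrightarrow> T i \<le> \<bar>r - r'\<bar>)"

definition legal_scenario :: "('a \<Rightarrow> crit) \<Rightarrow> ('a \<Rightarrow> real) \<Rightarrow> ('a \<Rightarrow> real)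
    \<Rightarrow> ('a \<Rightarrow> real set) \<Rightarrow> ('a \<times> real \<Rightarrow> real) \<Rightarrow> bool" where
  "legal_scenario crit CL CH R c \<longleftrightarrow>
     (\<forall>i r. r \<in> R i \<longrightarrow> 0 < c (i, r) \<and> c (i, r) \<le> (if crit i = HI then CH i else CL i))"

text \<open>A schedule on m unit-speed processors: sched t p is the job run on processor p at time t.\<close>

definition run_set :: "(real \<Rightarrow> nat \<Rightarrow> ('a \<times> real) option) \<Rightarrow> nat \<Rightarrow> 'a \<times> real \<Rightarrow> real set" where
  "run_set sched m j = {t. \<exists>p<m. sched t p = Some j}"

definition exec :: "(real \<Rightarrow> nat \<Rightarrow> ('a \<times> real) option) \<Rightarrow> nat \<Rightarrow> 'a \<times> real \<Rightarrow> real \<Rightarrow> real \<Rightarrow> real" where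
  "exec sched m j a b = measure lebesgue ({a..b} \<inter> run_set sched m j)"

definition valid_schedule :: "nat \<Rightarrow> ('a \<Rightarrow> real set) \<Rightarrow> ('a \<times> real \<Rightarrow> real)
    \<Rightarrow> (real \<Rightarrow> nat \<Rightarrow> ('a \<times> real) option) \<Rightarrow> bool" where
  "valid_schedule m R c sched \<longleftrightarrow>
     (\<forall>t p i r. p < m \<longrightarrow> sched t p = Some (i, r) \<longrightarrow> r \<in> R i \<and> r \<le> t) \<and>
     (\<forall>t p q. p < m \<longrightarrow> q < m \<longrightarrow> sched t p \<noteq> None \<longrightarrow> sched t p = sched t q \<longrightarrow> p = q) \<and>
     (\<forall>j. run_set sched m j \<in> sets lebesgue) \<and>
     (\<forall>i r t. r \<in> R i \<longrightarrow> exec sched m (i, r) 0 t \<le> c (i, r))"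

definition switched :: "('a \<Rightarrow> crit) \<Rightarrow> ('a \<Rightarrow> real) \<Rightarrow> ('a \<Rightarrow> real set) \<Rightarrow> ('a \<times> real \<Rightarrow> real)
    \<Rightarrow> (real \<Rightarrow> nat \<Rightarrow> ('a \<times> real) option) \<Rightarrow> nat \<Rightarrow> real \<Rightarrow> bool" where
  "switched crit CL R c sched m t \<longleftrightarrow>
     (\<exists>i r. r \<in> R i \<and> crit i = HI \<and> CL i < c (i, r) \<and> CL i \<le> exec sched m (i, r) 0 t)"

definition mc_correct :: "('a \<Rightarrow> crit) \<Rightarrow> ('a \<Rightarrow> real) \<Rightarrow> ('a \<Rightarrow> real) \<Rightarrow> ('a \<Rightarrow> real set)
    \<Rightarrow> ('a \<times> real \<Rightarrow> real) \<Rightarrow> (real \<Rightarrow> nat \<Rightarrow> ('a \<times> real) option) \<Rightarrow> nat \<Rightarrow> bool" where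
  "mc_correct crit T CL R c sched m \<longleftrightarrow>
     (\<forall>i r. r \<in> R i \<longrightarrow> (\<forall>t < r + T i. \<not> switched crit CL R c sched m t) \<longrightarrow>
        min (c (i, r)) (CL i) \<le> exec sched m (i, r) 0 (r + T i)) \<and>
     (\<forall>i r. r \<in> R i \<longrightarrow> crit i = HI \<longrightarrow> c (i, r) \<le> exec sched m (i, r) 0 (r + T i))"

definition MC_schedulable :: "'a set \<Rightarrow> ('a \<Rightarrow> crit) \<Rightarrow> ('a \<Rightarrow> real) \<Rightarrow> ('a \<Rightarrow> real)
    \<Rightarrow> ('a \<Rightarrow> real) \<Rightarrow> nat \<Rightarrow> bool" where
  "MC_schedulable tau crit T CL CH m \<longleftrightarrow>
     (\<forall>R c. legal_arrivals tau T R \<longrightarrow> legal_scenario crit CL CH R c \<longrightarrow>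
        (\<exists>sched. valid_schedule m R c sched \<and> mc_correct crit T CL R c sched m))"

definition soma_feasible :: "'a set \<Rightarrow> ('a \<Rightarrow> crit) \<Rightarrow> ('a \<Rightarrow> real) \<Rightarrow> ('a \<Rightarrow> real) \<Rightarrow> ('a \<Rightarrow> real)
    \<Rightarrow> nat \<Rightarrow> ('a \<Rightarrow> nat) \<Rightarrow> ('a \<Rightarrow> real) \<Rightarrow> ('a \<Rightarrow> nat \<Rightarrow> real) \<Rightarrow> ('a \<Rightarrow> real)
    \<Rightarrow> (nat \<Rightarrow> real) \<Rightarrow> bool" where
  "soma_feasible tau crit T CL CH m k thL thH thF w \<longleftrightarrow>
   (let tH = {i\<in>tau. crit i = HI}; n = card tH;
        uL = (\<lambda>i. CL i / T i); uH = (\<lambda>i. CH i / T i);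
        th = (\<lambda>i j. if j \<le> n then thH i j else thF i);
        Rr = (\<lambda>i. th i (k i)) in
    (\<forall>i\<in>tau. crit i = LO \<longrightarrow> thL i = uL i) \<and>
    (\<forall>i\<in>tau. uL i \<le> thL i) \<and>
    (\<forall>j\<in>{1..n}. (\<Sum>i\<in>tH. thH i j) \<le> real m) \<and> (\<Sum>i\<in>tH. thF i) \<le> real m \<and>
    (\<forall>i\<in>tH.
        CH i - CL i \<le> (\<Sum>j\<in>{1..<k i}. thH i j * w j)
                       + Rr i * (T i - CL i / thL i - (\<Sum>j\<in>{1..<k i}. w j)) \<and>
        (\<forall>j\<in>{k i..n}. thL i \<le> thH i j) \<and> thL i \<le> thF i) \<and>
    (\<forall>i\<in>tH.
        uH i * (\<Sum>j\<in>{1..<k i}. w j) \<le> (\<Sum>j\<in>{1..<k i}. thH i j * w j) \<and>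
        (\<forall>j\<in>{1..<k i}. th i j \<le> th i (j + 1)) \<and>
        (\<forall>j\<in>{k i..n}. uH i \<le> thH i j) \<and> uH i \<le> thF i) \<and>
    (\<forall>i\<in>tH. (\<forall>j\<in>{1..n}. thH i j \<le> 1) \<and> thF i \<le> 1) \<and>
    (\<forall>j\<in>{1..n}. 0 \<le> w j))"

definition soma_order :: "'a set \<Rightarrow> ('a \<Rightarrow> crit) \<Rightarrow> ('a \<Rightarrow> real) \<Rightarrow> ('a \<Rightarrow> real) \<Rightarrow> ('a \<Rightarrow> real)
    \<Rightarrow> ('a \<Rightarrow> nat) \<Rightarrow> bool" where
  "soma_order tau crit T CL CH k \<longleftrightarrow>
   (let tH = {i\<in>tau. crit i = HI}; key = (\<lambda>i. T i - CL i / (CH i / T i)) in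
    bij_betw k tH {1..card tH} \<and> (\<forall>i\<in>tH. \<forall>j\<in>tH. k i < k j \<longrightarrow> key i \<le> key j))"

definition soma_success_with :: "'a set \<Rightarrow> ('a \<Rightarrow> crit) \<Rightarrow> ('a \<Rightarrow> real) \<Rightarrow> ('a \<Rightarrow> real) \<Rightarrow> ('a \<Rightarrow> real)
    \<Rightarrow> nat \<Rightarrow> ('a \<Rightarrow> nat) \<Rightarrow> bool" where
  "soma_success_with tau crit T CL CH m k \<longleftrightarrow>
   (let tH = {i\<in>tau. crit i = HI} in
    \<exists>thL thH thF w. soma_feasible tau crit T CL CH m k thL thH thF w \<and>
      (\<forall>thL' thH' thF' w'. soma_feasible tau crit T CL CH m k thL' thH' thF' w' \<longrightarrow>
          (\<Sum>i\<in>tH. thL i) \<le> (\<Sum>i\<in>tH. thL' i)) \<and>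
      (\<Sum>i\<in>tau. thL i) \<le> real m)"

text \<open>SOMA declares success on m processors of speed s (execution times divided by s),
  whatever tie-breaking is used in step 2.\<close>

definition soma_success :: "'a set \<Rightarrow> ('a \<Rightarrow> crit) \<Rightarrow> ('a \<Rightarrow> real) \<Rightarrow> ('a \<Rightarrow> real) \<Rightarrow> ('a \<Rightarrow> real)
    \<Rightarrow> nat \<Rightarrow> real \<Rightarrow> bool" where
  "soma_success tau crit T CL CH m s \<longleftrightarrow>
   (let CLs = (\<lambda>i. CL i / s); CHs = (\<lambda>i. CH i / s) in
    \<forall>k. soma_order tau crit T CLs CHs k \<longrightarrow> soma_success_with tau crit T CLs CHs m k)"

end

theory Submission imports Defs begin

lemma card_jobs_le:
  assumes "finite I" "inj_on g I"
  shows "card {x\<in>I. t \<in> run_set sched m (g x)} \<le> m"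
proof -
  let ?A = "{x\<in>I. t \<in> run_set sched m (g x)}"
  define p where "p x = (SOME p. p < m \<and> sched t p = Some (g x))" for x
  have p: "p x < m \<and> sched t (p x) = Some (g x)" if "x \<in> ?A" for x
  proof -
    have "\<exists>p. p < m \<and> sched t p = Some (g x)" using that by (auto simp: run_set_def)
    then show ?thesis unfolding p_def by (rule someI_ex)
  qed
  have "inj_on p ?A"
  proof (rule inj_onI)
    fix x y assume "x \<in> ?A" "y \<in> ?A" "p x = p y"
    then have "g x = g y" using p[of x] p[of y] by auto
    then show "x = y" using assms(2) \<open>x \<in> ?A\<close> \<open>y \<in> ?A\<close> by (auto dest: inj_onD)
  qed
  moreover have "p ` ?A \<subseteq> {..<m}" using p by auto
  ultimately have "card ?A \<le> card {..<m}" by (intro card_inj_on_le) auto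
  then show ?thesis by simp
qed

lemma sched_sum_bound:
  assumes "finite I" "inj_on g I" "\<forall>j. run_set sched m j \<in> sets lebesgue" "a \<le> b"
  shows "(\<Sum>x\<in>I. measure lebesgue ({a..b} \<inter> run_set sched m (g x))) \<le> real m * (b - a)"
proof -
  define A where "A x = {a..b} \<inter> run_set sched m (g x)" for x
  have Am: "A x \<in> sets lebesgue" for x unfolding A_def by (metis assms(3) lmeasurable_interval(1) fmeasurableD sets.Int)
  have Af: "A x \<in> fmeasurable lebesgue" for x
    by (rule fmeasurableI2[of "{a..b}", OF _ _ Am]) (auto simp: A_def)
  have intI: "integrable lebesgue (indicat_real S)" if "S \<in> fmeasurable lebesgue" for S
  proof -
    have sp: "S \<inter> space lebesgue = S" by simp
    show ?thesis using that unfolding integrable_indicator_iff fmeasurable_def sp by blast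
  qed
  have int: "integrable lebesgue (indicat_real (A x))" for x using intI Af by blast
  have "(\<Sum>x\<in>I. measure lebesgue (A x)) = (\<Sum>x\<in>I. integral\<^sup>L lebesgue (indicat_real (A x)))"
    by (simp add: integral_indicator)
  also have "\<dots> = integral\<^sup>L lebesgue (\<lambda>t. \<Sum>x\<in>I. indicat_real (A x) t)"
    by (rule Bochner_Integration.integral_sum[where M=lebesgue and I=I and f="\<lambda>x. indicat_real (A x)", symmetric]) (use int in auto)
  also have "\<dots> \<le> integral\<^sup>L lebesgue (\<lambda>t. real m * indicat_real {a..b} t)"
  proof (rule integral_mono)
    show "integrable lebesgue (\<lambda>t. \<Sum>x\<in>I. indicat_real (A x) t)" using int by auto
    show "integrable lebesgue (\<lambda>t. real m * indicat_real {a..b} t)"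
      using intI[OF lmeasurable_interval(1)] by auto
    fix t
    show "(\<Sum>x\<in>I. indicat_real (A x) t) \<le> real m * indicat_real {a..b} t"
    proof (cases "t \<in> {a..b}")
      case True
      have "(\<Sum>x\<in>I. indicat_real (A x) t) = (\<Sum>x\<in>I. if t \<in> run_set sched m (g x) then 1 else 0)"
        using True by (intro sum.cong) (auto simp: A_def indicator_def)
      also have "\<dots> = real (card {x\<in>I. t \<in> run_set sched m (g x)})"
        using assms(1) by (simp add: sum.If_cases Int_def)
      also have "\<dots> \<le> real m" using card_jobs_le[OF assms(1,2)] by simp
      finally show ?thesis using True by simp
    next
      case False
      then have "\<forall>x\<in>I. indicat_real (A x) t = 0" by (auto simp: A_def indicator_def)
      then show ?thesis using False by simp
    qed
  qed
  also have "\<dots> = real m * (b - a)" using assms(4) by simp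
  finally show ?thesis by (simp add: A_def)
qed
lemma nat_floor_bounds:
  fixes y :: real assumes "0 \<le> y"
  shows "real (nat \<lfloor>y\<rfloor>) \<le> y" "y - 1 \<le> real (nat \<lfloor>y\<rfloor>)"
proof -
  have e: "real (nat \<lfloor>y\<rfloor>) = of_int \<lfloor>y\<rfloor>" using assms by simp
  show "real (nat \<lfloor>y\<rfloor>) \<le> y" unfolding e by simp
  show "y - 1 \<le> real (nat \<lfloor>y\<rfloor>)" unfolding e by linarith
qed

lemma exec_mono:
  assumes "\<forall>j. run_set sched m j \<in> sets lebesgue" "s \<le> H"
  shows "exec sched m j 0 s \<le> exec sched m j 0 H"
proof -
  have m1: "{0..s} \<inter> run_set sched m j \<in> sets lebesgue"
    by (metis assms(1) lmeasurable_interval(1) fmeasurableD sets.Int)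
  have m2: "{0..H} \<inter> run_set sched m j \<in> sets lebesgue"
    by (metis assms(1) lmeasurable_interval(1) fmeasurableD sets.Int)
  have f2: "{0..H} \<inter> run_set sched m j \<in> fmeasurable lebesgue"
    by (rule fmeasurableI2[of "{0..H}", OF _ _ m2]) auto
  show ?thesis unfolding exec_def
    by (rule measure_mono_fmeasurable[OF _ m1 f2]) (use assms(2) in auto)
qed

lemma util_bound:
  fixes C T :: "'a \<Rightarrow> real"
  assumes fin: "finite I0" and Tpos: "\<forall>i\<in>I0. 0 < T i" and C0: "\<forall>i\<in>I0. 0 \<le> C i"
    and meas: "\<forall>j. run_set sched m j \<in> sets lebesgue"
    and job: "\<forall>i\<in>I0. \<forall>q::nat. C i \<le> exec sched m (i, real q * T i) 0 (real q * T i + T i)"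
  shows "(\<Sum>i\<in>I0. C i / T i) \<le> real m"
proof -
  have key: "H * (\<Sum>i\<in>I0. C i / T i) \<le> real m * H + (\<Sum>i\<in>I0. C i)" if H: "0 < H" for H
  proof -
    define N where "N i = nat \<lfloor>H / T i\<rfloor>" for i
    define J where "J = Sigma I0 (\<lambda>i. {..<N i})"
    define g where "g = (\<lambda>(i, q::nat). (i, real q * T i))"
    have finJ: "finite J" unfolding J_def using fin by auto
    have inj: "inj_on g J"
    proof (rule inj_onI)
      fix x y assume "x \<in> J" "y \<in> J" "g x = g y"
      then show "x = y" using Tpos unfolding J_def g_def by (auto split: prod.splits)
    qed
    have NT: "(real q + 1) * T i \<le> H" if "i \<in> I0" "q < N i" for i q
    proof -
      have "real q + 1 \<le> real (N i)" using that(2) by linarith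
      also have "real (N i) \<le> H / T i" unfolding N_def using H Tpos that(1)
        by (intro nat_floor_bounds) auto
      finally show ?thesis using Tpos that(1) by (simp add: field_simps)
    qed
    have "(\<Sum>x\<in>J. C (fst x)) \<le> (\<Sum>x\<in>J. measure lebesgue ({0..H} \<inter> run_set sched m (g x)))"
    proof (rule sum_mono)
      fix x assume "x \<in> J"
      then obtain i q where x: "x = (i, q)" "i \<in> I0" "q < N i" unfolding J_def by auto
      have "C i \<le> exec sched m (i, real q * T i) 0 (real q * T i + T i)" using job x by auto
      also have "\<dots> \<le> exec sched m (i, real q * T i) 0 H"
        by (rule exec_mono[OF meas]) (use NT[OF x(2,3)] in \<open>simp add: algebra_simps\<close>)
      finally show "C (fst x) \<le> measure lebesgue ({0..H} \<inter> run_set sched m (g x))"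
        using x by (simp add: g_def exec_def)
    qed
    also have "\<dots> \<le> real m * (H - 0)"
      by (rule sched_sum_bound[OF finJ inj meas]) (use H in simp)
    finally have A: "(\<Sum>x\<in>J. C (fst x)) \<le> real m * H" by simp
    have B: "(\<Sum>x\<in>J. C (fst x)) = (\<Sum>i\<in>I0. real (N i) * C i)"
    proof -
      have "(\<Sum>x\<in>J. C (fst x)) = (\<Sum>(i,q)\<in>J. C i)" by (simp add: case_prod_beta)
      also have "\<dots> = (\<Sum>i\<in>I0. \<Sum>q\<in>{..<N i}. C i)"
        unfolding J_def using fin by (subst sum.Sigma) auto
      finally show ?thesis by simp
    qed
    have "H * (\<Sum>i\<in>I0. C i / T i) - (\<Sum>i\<in>I0. C i) = (\<Sum>i\<in>I0. (H / T i - 1) * C i)"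
      by (simp add: sum_distrib_left sum_subtractf[symmetric] algebra_simps)
    also have "\<dots> \<le> (\<Sum>i\<in>I0. real (N i) * C i)"
    proof (rule sum_mono)
      fix i assume i: "i \<in> I0"
      have "H / T i - 1 \<le> real (N i)" unfolding N_def using H Tpos i
        by (intro nat_floor_bounds) auto
      then show "(H / T i - 1) * C i \<le> real (N i) * C i" using C0 i by (intro mult_right_mono) auto
    qed
    finally show ?thesis using A B by linarith
  qed
  show ?thesis
  proof (rule ccontr)
    assume "\<not> ?thesis"
    then have gt: "(\<Sum>i\<in>I0. C i / T i) - real m > 0" by simp
    have K: "(\<Sum>i\<in>I0. C i) \<ge> 0" using C0 by (auto intro: sum_nonneg)
    define H where "H = ((\<Sum>i\<in>I0. C i) + 1) / ((\<Sum>i\<in>I0. C i / T i) - real m)"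
    have Hpos: "H > 0" unfolding H_def using gt K by simp
    have "H * ((\<Sum>i\<in>I0. C i / T i) - real m) = (\<Sum>i\<in>I0. C i) + 1"
      unfolding H_def using gt by simp
    then show False using key[OF Hpos] by (simp add: algebra_simps)
  qed
qed
lemma nat_sep:
  fixes q q' :: nat and T :: real
  assumes "0 < T" "real q * T \<noteq> real q' * T"
  shows "T \<le> \<bar>real q * T - real q' * T\<bar>"
proof -
  have "q \<noteq> q'" using assms by auto
  then have "1 \<le> \<bar>real q - real q'\<bar>" by (cases "q < q'") auto
  then have "1 * T \<le> \<bar>real q - real q'\<bar> * T" using assms(1) by (intro mult_right_mono) auto
  also have "\<dots> = \<bar>real q * T - real q' * T\<bar>" using assms(1)
    by (simp add: abs_mult left_diff_distrib[symmetric])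
  finally show ?thesis by simp
qed

lemma mc_necessary:
  fixes tau :: "'a set" and crit :: "'a \<Rightarrow> crit" and T CL CH :: "'a \<Rightarrow> real" and m :: nat
  assumes fin: "finite tau" and Tpos: "\<forall>i\<in>tau. 0 < T i"
    and C: "\<forall>i\<in>tau. 0 < CL i \<and> CL i \<le> CH i"
    and mc: "MC_schedulable tau crit T CL CH m"
  shows "(\<Sum>i\<in>tau. CL i / T i) \<le> real m"
    and "(\<Sum>i\<in>{i\<in>tau. crit i = HI}. CH i / T i) \<le> real m"
proof -
  define R where "R i = (if i \<in> tau then range (\<lambda>q::nat. real q * T i) else {})" for i
  have legal: "legal_arrivals tau T R"
    unfolding legal_arrivals_def
  proof (intro conjI allI ballI impI)
    fix i show "R i \<subseteq> {0..}" using Tpos by (auto simp: R_def)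
  next
    fix i assume "i \<notin> tau" then show "R i = {}" by (simp add: R_def)
  next
    fix i r r' assume "i \<in> tau" "r \<in> R i" "r' \<in> R i" "r \<noteq> r'"
    then show "T i \<le> \<bar>r - r'\<bar>" using Tpos nat_sep[of "T i"] by (auto simp: R_def)
  qed
  define c1 where "c1 = (\<lambda>(i::'a, r::real). CL i)"
  have "legal_scenario crit CL CH R c1"
    unfolding legal_scenario_def c1_def using C by (auto simp: R_def split: if_splits)
  then obtain s1 where s1: "valid_schedule m R c1 s1" "mc_correct crit T CL R c1 s1 m"
    using mc legal unfolding MC_schedulable_def by blast
  have meas1: "\<forall>j. run_set s1 m j \<in> sets lebesgue" using s1(1) by (simp add: valid_schedule_def)
  have job1: "\<forall>i\<in>tau. \<forall>q::nat. CL i \<le> exec s1 m (i, real q * T i) 0 (real q * T i + T i)"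
  proof (intro ballI allI)
    fix i q assume i: "i \<in> tau"
    have r: "real q * T i \<in> R i" using i by (auto simp: R_def)
    have ns: "\<forall>t < real q * T i + T i. \<not> switched crit CL R c1 s1 m t"
      by (simp add: switched_def c1_def)
    show "CL i \<le> exec s1 m (i, real q * T i) 0 (real q * T i + T i)"
      using s1(2) r ns unfolding mc_correct_def by (force simp: c1_def)
  qed
  show "(\<Sum>i\<in>tau. CL i / T i) \<le> real m"
    by (rule util_bound[OF fin Tpos _ meas1 job1]) (use C in auto)
  define c2 where "c2 = (\<lambda>(i::'a, r::real). if crit i = HI then CH i else CL i)"
  have "legal_scenario crit CL CH R c2"
    unfolding legal_scenario_def c2_def using C by (auto simp: R_def split: if_splits)
  then obtain s2 where s2: "valid_schedule m R c2 s2" "mc_correct crit T CL R c2 s2 m"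
    using mc legal unfolding MC_schedulable_def by blast
  have meas2: "\<forall>j. run_set s2 m j \<in> sets lebesgue" using s2(1) by (simp add: valid_schedule_def)
  have job2: "\<forall>i\<in>{i\<in>tau. crit i = HI}. \<forall>q::nat. CH i \<le> exec s2 m (i, real q * T i) 0 (real q * T i + T i)"
  proof (intro ballI allI)
    fix i q assume i: "i \<in> {i\<in>tau. crit i = HI}"
    have r: "real q * T i \<in> R i" using i by (auto simp: R_def)
    show "CH i \<le> exec s2 m (i, real q * T i) 0 (real q * T i + T i)"
      using s2(2) r i unfolding mc_correct_def by (force simp: c2_def)
  qed
  show "(\<Sum>i\<in>{i\<in>tau. crit i = HI}. CH i / T i) \<le> real m"
    by (rule util_bound[OF _ _ _ meas2 job2]) (use C Tpos fin in auto)
qed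
lemma soma_feasible_alt:
  assumes "tH = {i\<in>tau. crit i = HI}" "n = card tH"
  shows "soma_feasible tau crit T CL CH m k thL thH thF w \<longleftrightarrow>
    (\<forall>i\<in>tau. crit i = LO \<longrightarrow> thL i = CL i / T i) \<and>
    (\<forall>i\<in>tau. CL i / T i \<le> thL i) \<and>
    (\<forall>j\<in>{1..n}. (\<Sum>i\<in>tH. thH i j) \<le> real m) \<and> (\<Sum>i\<in>tH. thF i) \<le> real m \<and>
    (\<forall>i\<in>tH.
        CH i - CL i \<le> (\<Sum>j\<in>{1..<k i}. thH i j * w j)
                       + (if k i \<le> n then thH i (k i) else thF i) * (T i - CL i / thL i - (\<Sum>j\<in>{1..<k i}. w j)) \<and>
        (\<forall>j\<in>{k i..n}. thL i \<le> thH i j) \<and> thL i \<le> thF i) \<and>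
    (\<forall>i\<in>tH.
        CH i / T i * (\<Sum>j\<in>{1..<k i}. w j) \<le> (\<Sum>j\<in>{1..<k i}. thH i j * w j) \<and>
        (\<forall>j\<in>{1..<k i}. (if j \<le> n then thH i j else thF i) \<le> (if j + 1 \<le> n then thH i (j + 1) else thF i)) \<and>
        (\<forall>j\<in>{k i..n}. CH i / T i \<le> thH i j) \<and> CH i / T i \<le> thF i) \<and>
    (\<forall>i\<in>tH. (\<forall>j\<in>{1..n}. thH i j \<le> 1) \<and> thF i \<le> 1) \<and>
    (\<forall>j\<in>{1..n}. 0 \<le> w j)"
  unfolding soma_feasible_def Let_def assms by (rule refl)

lemma alg_lo: fixes x y :: real assumes "0 < x" "x \<le> y"
  shows "x / (4/3) \<le> 3 * x * y / (y + 3 * x)"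
  using assms by (simp add: field_simps)

lemma alg_hi: fixes x y :: real assumes "0 < x" "x \<le> y"
  shows "3 * x * y / (y + 3 * x) \<le> y"
  using assms by (simp add: field_simps)

lemma alg_sum: fixes x y :: real assumes "0 < x" "x \<le> y"
  shows "3 * x * y / (y + 3 * x) \<le> 3/4 * x + y / 4"
proof -
  have "0 \<le> (3*x - y)^2" by simp
  then show ?thesis using assms by (simp add: field_simps power2_eq_square) 
qed

lemma alg_s4: fixes CL CH T :: real assumes "0 < T" "0 < CL" "CL \<le> CH"
  shows "CH / (4/3) - CL / (4/3) \<le> CH / T * (T - CL / (4/3) / (3 * (CL / T) * (CH / T) / (CH / T + 3 * (CL / T))) - 0)"
  using assms by (simp add: field_simps)
lemma soma_P0:
  fixes tau :: "'a set" and crit :: "'a \<Rightarrow> crit" and T CL CH :: "'a \<Rightarrow> real" and m :: nat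
  assumes fin: "finite tau" and Tpos: "\<forall>i\<in>tau. 0 < T i"
    and C: "\<forall>i\<in>tau. 0 < CL i \<and> CL i \<le> CH i"
    and U: "\<forall>i\<in>tau. CH i / T i \<le> 1"
    and kr: "\<forall>i\<in>{i\<in>tau. crit i = HI}. 1 \<le> k i \<and> k i \<le> card {i\<in>tau. crit i = HI}"
    and U1: "(\<Sum>i\<in>tau. CL i / T i) \<le> real m"
    and U2: "(\<Sum>i\<in>{i\<in>tau. crit i = HI}. CH i / T i) \<le> real m"
  shows "\<exists>thL thH thF w. soma_feasible tau crit T (\<lambda>i. CL i / (4/3)) (\<lambda>i. CH i / (4/3)) m k thL thH thF w
           \<and> (\<Sum>i\<in>tau. thL i) \<le> real m"
proof -
  define tH where "tH = {i\<in>tau. crit i = HI}"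
  define n where "n = card tH"
  define x where "x i = CL i / T i" for i
  define y where "y i = CH i / T i" for i
  define thL where "thL i = (if crit i = HI then 3 * x i * y i / (y i + 3 * x i) else CL i / (4/3) / T i)" for i
  define thH :: "'a \<Rightarrow> nat \<Rightarrow> real" where "thH i j = y i" for i j
  define thF where "thF i = y i" for i
  define w :: "nat \<Rightarrow> real" where "w j = 0" for j
  have xy: "0 < x i \<and> x i \<le> y i" if "i \<in> tau" for i
    using C Tpos that unfolding x_def y_def by (auto simp: divide_right_mono)
  have kr': "\<forall>i\<in>tH. 1 \<le> k i \<and> k i \<le> n" using kr unfolding tH_def n_def by blast
  have f: "soma_feasible tau crit T (\<lambda>i. CL i / (4/3)) (\<lambda>i. CH i / (4/3)) m k thL thH thF w"
    unfolding soma_feasible_alt[OF tH_def n_def]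
  proof (intro conjI)
    show "\<forall>i\<in>tau. crit i = LO \<longrightarrow> thL i = CL i / (4/3) / T i" by (simp add: thL_def)
    show "\<forall>i\<in>tau. CL i / (4/3) / T i \<le> thL i"
    proof
      fix i assume i: "i \<in> tau"
      have "CL i / (4/3) / T i = x i / (4/3)" by (simp add: x_def)
      then show "CL i / (4/3) / T i \<le> thL i" using alg_lo[of "x i" "y i"] xy[OF i] by (simp add: thL_def)
    qed
    show "\<forall>j\<in>{1..n}. (\<Sum>i\<in>tH. thH i j) \<le> real m" using U2 by (simp add: thH_def y_def tH_def)
    show "(\<Sum>i\<in>tH. thF i) \<le> real m" using U2 by (simp add: thF_def y_def tH_def)
    show "\<forall>i\<in>tH. CH i / (4/3) - CL i / (4/3) \<le> (\<Sum>j\<in>{1..<k i}. thH i j * w j)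
        + (if k i \<le> n then thH i (k i) else thF i) * (T i - CL i / (4/3) / thL i - (\<Sum>j\<in>{1..<k i}. w j)) \<and>
        (\<forall>j\<in>{k i..n}. thL i \<le> thH i j) \<and> thL i \<le> thF i"
    proof
      fix i assume i: "i \<in> tH"
      then have it: "i \<in> tau" "crit i = HI" by (auto simp: tH_def)
      have hi: "thL i \<le> y i" using alg_hi[of "x i" "y i"] xy[OF it(1)] it(2) by (simp add: thL_def)
      have s4: "CH i / (4/3) - CL i / (4/3) \<le> y i * (T i - CL i / (4/3) / thL i - 0)"
        using alg_s4[of "T i" "CL i" "CH i"] C Tpos it unfolding thL_def x_def y_def by simp
      show "CH i / (4/3) - CL i / (4/3) \<le> (\<Sum>j\<in>{1..<k i}. thH i j * w j)
        + (if k i \<le> n then thH i (k i) else thF i) * (T i - CL i / (4/3) / thL i - (\<Sum>j\<in>{1..<k i}. w j)) \<and>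
        (\<forall>j\<in>{k i..n}. thL i \<le> thH i j) \<and> thL i \<le> thF i"
        using s4 hi by (simp add: thH_def thF_def w_def)
    qed
    show "\<forall>i\<in>tH. CH i / (4/3) / T i * (\<Sum>j\<in>{1..<k i}. w j) \<le> (\<Sum>j\<in>{1..<k i}. thH i j * w j) \<and>
        (\<forall>j\<in>{1..<k i}. (if j \<le> n then thH i j else thF i) \<le> (if j + 1 \<le> n then thH i (j + 1) else thF i)) \<and>
        (\<forall>j\<in>{k i..n}. CH i / (4/3) / T i \<le> thH i j) \<and> CH i / (4/3) / T i \<le> thF i"
    proof
      fix i assume i: "i \<in> tH"
      then have it: "i \<in> tau" by (auto simp: tH_def)
      have "CH i / (4/3) / T i \<le> y i" using xy[OF it] by (simp add: y_def)
      then show "CH i / (4/3) / T i * (\<Sum>j\<in>{1..<k i}. w j) \<le> (\<Sum>j\<in>{1..<k i}. thH i j * w j) \<and>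
        (\<forall>j\<in>{1..<k i}. (if j \<le> n then thH i j else thF i) \<le> (if j + 1 \<le> n then thH i (j + 1) else thF i)) \<and>
        (\<forall>j\<in>{k i..n}. CH i / (4/3) / T i \<le> thH i j) \<and> CH i / (4/3) / T i \<le> thF i"
        by (simp add: thH_def thF_def w_def)
    qed
    show "\<forall>i\<in>tH. (\<forall>j\<in>{1..n}. thH i j \<le> 1) \<and> thF i \<le> 1"
      using U by (simp add: thH_def thF_def y_def tH_def)
    show "\<forall>j\<in>{1..n}. 0 \<le> w j" by (simp add: w_def)
  qed
  have "(\<Sum>i\<in>tau. thL i) \<le> (\<Sum>i\<in>tau. 3/4 * x i + (if crit i = HI then y i / 4 else 0))"
  proof (rule sum_mono)
    fix i assume i: "i \<in> tau"
    show "thL i \<le> 3/4 * x i + (if crit i = HI then y i / 4 else 0)"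
      using alg_sum[of "x i" "y i"] xy[OF i] by (auto simp: thL_def x_def)
  qed
  also have "\<dots> = 3/4 * (\<Sum>i\<in>tau. x i) + 1/4 * (\<Sum>i\<in>tH. y i)"
    using fin by (simp add: sum.distrib sum_distrib_left sum.If_cases tH_def sum_divide_distrib Int_def)
  also have "\<dots> \<le> 3/4 * real m + 1/4 * real m"
    using U1 U2 by (intro add_mono) (auto simp: x_def y_def tH_def)
  finally show ?thesis using f by auto
qed
lemma chain_le:
  fixes f :: "nat \<Rightarrow> real"
  assumes "\<forall>j\<in>{1..<k}. f j \<le> f (j + 1)" "1 \<le> j" "j \<le> k"
  shows "f j \<le> f k"
  using assms
proof (induction k)
  case 0 then show ?case by simp
next
  case (Suc k)
  show ?case
  proof (cases "j = Suc k")
    case True then show ?thesis by simp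
  next
    case False
    then have jk: "j \<le> k" using Suc.prems by simp
    have "f j \<le> f k" using Suc.IH Suc.prems jk by auto
    also have "f k \<le> f (Suc k)" using Suc.prems jk by auto
    finally show ?thesis .
  qed
qed

lemma feas_facts:
  assumes feas: "soma_feasible tau crit T CL CH m k thL thH thF w"
    and tH: "tH = {i\<in>tau. crit i = HI}" and n: "n = card tH"
    and i: "i \<in> tH" and ki: "1 \<le> k i" "k i \<le> n"
  shows "CH i - CL i \<le> thH i (k i) * (T i - CL i / thL i)"
    and "CH i / T i \<le> thH i (k i)" and "thH i (k i) \<le> 1"
    and "thL i \<le> thH i n" and "CH i / T i \<le> thH i n" and "CL i / T i \<le> thL i"
    and "(\<Sum>i\<in>tH. thH i n) \<le> real m"
proof -
  note F = feas[unfolded soma_feasible_alt[OF tH n]]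
  have itau: "i \<in> tau" using i tH by auto
  have S4: "CH i - CL i \<le> (\<Sum>j\<in>{1..<k i}. thH i j * w j)
                       + thH i (k i) * (T i - CL i / thL i - (\<Sum>j\<in>{1..<k i}. w j))"
    using F i ki by auto
  have ch: "\<forall>j\<in>{1..<k i}. (if j \<le> n then thH i j else thF i) \<le> (if j + 1 \<le> n then thH i (j + 1) else thF i)"
    using F i by auto
  have wpos: "\<forall>j\<in>{1..n}. 0 \<le> w j" using F by auto
  have "(\<Sum>j\<in>{1..<k i}. thH i j * w j) \<le> (\<Sum>j\<in>{1..<k i}. thH i (k i) * w j)"
  proof (rule sum_mono)
    fix j assume j: "j \<in> {1..<k i}"
    have "(if j \<le> n then thH i j else thF i) \<le> (if k i \<le> n then thH i (k i) else thF i)"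
      by (rule chain_le[where f="\<lambda>j. if j \<le> n then thH i j else thF i", OF ch]) (use j in auto)
    then have "thH i j \<le> thH i (k i)" using j ki by auto
    moreover have "0 \<le> w j" using wpos j ki by auto
    ultimately show "thH i j * w j \<le> thH i (k i) * w j" by (rule mult_right_mono)
  qed
  also have "\<dots> = thH i (k i) * (\<Sum>j\<in>{1..<k i}. w j)" by (simp add: sum_distrib_left)
  finally show "CH i - CL i \<le> thH i (k i) * (T i - CL i / thL i)"
    using S4 by (simp add: algebra_simps)
  show "CH i / T i \<le> thH i (k i)" using F i ki by auto
  show "thH i (k i) \<le> 1" using F i ki by auto
  show "thL i \<le> thH i n" using F i ki by auto
  show "CH i / T i \<le> thH i n" using F i ki by auto
  show "CL i / T i \<le> thL i" using F itau by auto
  show "(\<Sum>i\<in>tH. thH i n) \<le> real m" using F ki by auto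
qed

lemma feas_lb:
  assumes feas: "soma_feasible tau crit T CL CH m k thL thH thF w"
    and tH: "tH = {i\<in>tau. crit i = HI}" and n: "n = card tH"
    and i: "i \<in> tH" and ki: "1 \<le> k i" "k i \<le> n"
    and C: "0 < T i" "0 < CL i" "CL i \<le> CH i" "CH i \<le> T i"
  shows "CL i / (T i - CH i + CL i) \<le> thL i"
proof -
  note f = feas_facts[OF feas tH n i ki]
  let ?R = "thH i (k i)"
  have xpos: "0 < thL i" using f(6) C by (smt (verit) divide_pos_pos)
  have Rpos: "0 < ?R" using f(2) C by (smt (verit) divide_pos_pos)
  have nn: "0 \<le> T i - CL i / thL i"
  proof (rule ccontr)
    assume "\<not> ?thesis"
    then have "?R * (T i - CL i / thL i) < 0" using Rpos by (simp add: mult_pos_neg)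
    then show False using f(1) C by linarith
  qed
  have "?R * (T i - CL i / thL i) \<le> (T i - CL i / thL i)"
    using mult_right_mono[OF f(3) nn] by simp
  then have "CH i - CL i \<le> T i - CL i / thL i" using f(1) by linarith
  then have "CL i / thL i \<le> T i - CH i + CL i" by linarith
  then have "CL i \<le> (T i - CH i + CL i) * thL i" using xpos by (simp add: divide_le_eq)
  then show ?thesis using C by (simp add: divide_le_eq mult.commute)
qed

lemma feas_LO_sum:
  assumes feas: "soma_feasible tau crit T CL CH m k thL thH thF w" and fin: "finite tau"
  shows "(\<Sum>i\<in>tau. thL i) = (\<Sum>i\<in>tau - {i\<in>tau. crit i = HI}. CL i / T i) + (\<Sum>i\<in>{i\<in>tau. crit i = HI}. thL i)"
proof -
  have LO: "\<forall>i\<in>tau. crit i = LO \<longrightarrow> thL i = CL i / T i"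
    using feas unfolding soma_feasible_alt[OF refl refl] by blast
  have "(\<Sum>i\<in>tau. thL i) = (\<Sum>i\<in>tau - {i\<in>tau. crit i = HI}. thL i) + (\<Sum>i\<in>{i\<in>tau. crit i = HI}. thL i)"
    using fin by (intro sum.subset_diff) auto
  also have "(\<Sum>i\<in>tau - {i\<in>tau. crit i = HI}. thL i) = (\<Sum>i\<in>tau - {i\<in>tau. crit i = HI}. CL i / T i)"
  proof (rule sum.cong)
    fix i assume "i \<in> tau - {i\<in>tau. crit i = HI}"
    then show "thL i = CL i / T i" using LO by (cases "crit i") auto
  qed simp
  finally show ?thesis .
qed
lemma soma_min:
  fixes tau :: "'a set" and crit :: "'a \<Rightarrow> crit" and T CL CH :: "'a \<Rightarrow> real" and m :: nat
  assumes fin: "finite tau" and Tpos: "\<forall>i\<in>tau. 0 < T i"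
    and C: "\<forall>i\<in>{i\<in>tau. crit i = HI}. 0 < CL i \<and> CL i \<le> CH i \<and> CH i \<le> T i"
    and bij: "bij_betw k {i\<in>tau. crit i = HI} {1..card {i\<in>tau. crit i = HI}}"
    and feas0: "soma_feasible tau crit T CL CH m k thL0 thH0 thF0 w0"
  shows "\<exists>thL thH thF w. soma_feasible tau crit T CL CH m k thL thH thF w \<and>
      (\<forall>thL' thH' thF' w'. soma_feasible tau crit T CL CH m k thL' thH' thF' w' \<longrightarrow>
          (\<Sum>i\<in>{i\<in>tau. crit i = HI}. thL i) \<le> (\<Sum>i\<in>{i\<in>tau. crit i = HI}. thL' i)) \<and>
      (\<Sum>i\<in>tau. thL i) \<le> (\<Sum>i\<in>tau. thL0 i)"
proof (cases "{i\<in>tau. crit i = HI} = {}")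
  case True
  have "soma_feasible tau crit T CL CH m k thL0 thH0 thF0 w0 \<and>
      (\<forall>thL' thH' thF' w'. soma_feasible tau crit T CL CH m k thL' thH' thF' w' \<longrightarrow>
          (\<Sum>i\<in>{i\<in>tau. crit i = HI}. thL0 i) \<le> (\<Sum>i\<in>{i\<in>tau. crit i = HI}. thL' i)) \<and>
      (\<Sum>i\<in>tau. thL0 i) \<le> (\<Sum>i\<in>tau. thL0 i)"
    using feas0 unfolding True by simp
  then show ?thesis by blast
next
  case False
  define tH where "tH = {i\<in>tau. crit i = HI}"
  define n where "n = card tH"
  have finH: "finite tH" using fin by (simp add: tH_def)
  have tHne: "tH \<noteq> {}" using False by (simp add: tH_def)
  have n1: "1 \<le> n" using finH tHne by (simp add: n_def Suc_le_eq card_gt_0_iff)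
  have bij': "bij_betw k tH {1..n}" using bij by (simp add: tH_def n_def)
  have kr: "1 \<le> k i \<and> k i \<le> n" if "i \<in> tH" for i
    using bij' that by (auto simp: bij_betw_def)
  have kr1: "1 \<le> k i" and kr2: "k i \<le> n" if "i \<in> tH" for i using kr[OF that] by auto
  obtain l where l: "l \<in> tH" "k l = n"
    using bij' n1 by (metis atLeastAtMost_iff bij_betw_iff_bijections order_refl)
  have kne: "k i < n" if "i \<in> tH" "i \<noteq> l" for i
  proof -
    have "k i \<noteq> k l" using bij' that l(1) by (auto simp: bij_betw_def inj_on_def)
    then show ?thesis using kr[OF that(1)] l(2) by simp
  qed
  have CH: "0 < T i \<and> 0 < CL i \<and> CL i \<le> CH i \<and> CH i \<le> T i" if "i \<in> tH" for i
    using C Tpos that by (auto simp: tH_def)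
  define a where "a i = CL i / (T i - CH i + CL i)" for i
  have a_props: "CL i / T i \<le> a i \<and> a i \<le> 1 \<and> CL i / a i = T i - CH i + CL i \<and> 0 < a i" if "i \<in> tH" for i
  proof -
    have c: "0 < T i" "0 < CL i" "CL i \<le> CH i" "CH i \<le> T i" using CH[OF that] by auto
    have D: "0 < T i - CH i + CL i" "T i - CH i + CL i \<le> T i" using c by auto
    have "CL i / T i \<le> a i" unfolding a_def using c D by (intro divide_left_mono) auto
    moreover have "a i \<le> 1" unfolding a_def using c D by simp
    moreover have "CL i / a i = T i - CH i + CL i" unfolding a_def using c D by simp
    moreover have "0 < a i" unfolding a_def using c D by simp
    ultimately show ?thesis by blast
  qed
  define M where "M i = max (CH i / T i) (a i)" for i
  have M_props: "0 \<le> M i \<and> M i \<le> 1 \<and> CH i / T i \<le> M i \<and> a i \<le> M i" if "i \<in> tH" for i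
    using a_props[OF that] CH[OF that] unfolding M_def by auto
  define S where "S = (\<Sum>i\<in>tH - {l}. M i)"
  define Q where "Q = {p::real \<times> real. CL l / T l \<le> fst p \<and> fst p \<le> snd p \<and> CH l / T l \<le> snd p \<and>
     snd p \<le> 1 \<and> snd p + S \<le> real m \<and> (CH l - CL l) * fst p \<le> snd p * (T l * fst p - CL l)}"
  have inQ: "(thL' l, thH' l n) \<in> Q \<and> (\<forall>i\<in>tH. a i \<le> thL' i)"
    if feas: "soma_feasible tau crit T CL CH m k thL' thH' thF' w'" for thL' thH' thF' w'
  proof -
    note fl = feas_facts[OF feas tH_def n_def l(1) kr1[OF l(1)] kr2[OF l(1)]]
    have lb: "\<forall>i\<in>tH. a i \<le> thL' i"
    proof
      fix i assume i: "i \<in> tH"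
      show "a i \<le> thL' i" unfolding a_def
        by (rule feas_lb[OF feas tH_def n_def i]) (use kr[OF i] CH[OF i] in auto)
    qed
    have xpos: "0 < thL' l" using fl(6) CH[OF l(1)] by (smt (verit) divide_pos_pos)
    have s4: "CH l - CL l \<le> thH' l n * (T l - CL l / thL' l)" using fl(1) l(2) by simp
    have "(CH l - CL l) * thL' l \<le> thH' l n * (T l - CL l / thL' l) * thL' l"
      using mult_right_mono[OF s4] xpos by simp
    also have "\<dots> = thH' l n * (T l * thL' l - CL l)" using xpos by (simp add: field_simps)
    finally have q6: "(CH l - CL l) * thL' l \<le> thH' l n * (T l * thL' l - CL l)" .
    have "S \<le> (\<Sum>i\<in>tH - {l}. thH' i n)" unfolding S_def
    proof (rule sum_mono)
      fix i assume i: "i \<in> tH - {l}"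
      have i': "i \<in> tH" using i by simp
      note fi = feas_facts[OF feas tH_def n_def i' kr1[OF i'] kr2[OF i']]
      show "M i \<le> thH' i n" unfolding M_def using fi(4,5) lb i by auto
    qed
    moreover have "(\<Sum>i\<in>tH. thH' i n) = thH' l n + (\<Sum>i\<in>tH - {l}. thH' i n)"
      using finH l(1) by (rule sum.remove)
    ultimately have q5: "thH' l n + S \<le> real m" using fl(7) by linarith
    have "(thL' l, thH' l n) \<in> Q" unfolding Q_def using fl(2-6) l(2) q5 q6 by auto
    then show ?thesis using lb by blast
  qed
  have Qcl: "closed Q" unfolding Q_def
    by (intro closed_Collect_conj closed_Collect_le continuous_intros)
  have Qb: "bounded Q"
  proof (rule bounded_subset)
    show "bounded ({0..1::real} \<times> {0..1::real})" by (intro bounded_Times) simp_all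
    have "0 \<le> CL l / T l" "0 \<le> CH l / T l" using CH[OF l(1)] by auto
    then show "Q \<subseteq> {0..1::real} \<times> {0..1::real}" unfolding Q_def by auto
  qed
  have Qc: "compact (fst ` Q)"
    by (rule compact_continuous_image[OF continuous_on_fst[OF continuous_on_id]])
       (use Qcl Qb compact_eq_bounded_closed in blast)
  have Qne: "fst ` Q \<noteq> {}" using inQ[OF feas0] by blast
  obtain xs where xs: "xs \<in> fst ` Q" "\<forall>t\<in>fst ` Q. xs \<le> t"
    using compact_attains_inf[OF Qc Qne] by blast
  then obtain Rs where QR: "(xs, Rs) \<in> Q" by auto
  have Q1: "CL l / T l \<le> xs" "xs \<le> Rs" "CH l / T l \<le> Rs" "Rs \<le> 1" "Rs + S \<le> real m"
    "(CH l - CL l) * xs \<le> Rs * (T l * xs - CL l)" using QR unfolding Q_def by auto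
  have xspos: "0 < xs" using Q1(1) CH[OF l(1)] by (smt (verit) divide_pos_pos)
  have Rspos: "0 < Rs" using Q1(3) CH[OF l(1)] by (smt (verit) divide_pos_pos)
  define thL where "thL i = (if i \<in> tH then (if i = l then xs else a i) else CL i / T i)" for i
  define thH :: "'a \<Rightarrow> nat \<Rightarrow> real" where
    "thH i j = (if j < k i then - real n else if j = n then (if i = l then Rs else M i) else 1)" for i j
  define thF where "thF i = (if i = l then Rs else M i)" for i
  define w :: "nat \<Rightarrow> real" where "w j = 0" for j
  have sumF: "(\<Sum>i\<in>tH. thF i) = Rs + S"
  proof -
    have "(\<Sum>i\<in>tH. thF i) = thF l + (\<Sum>i\<in>tH - {l}. thF i)" using finH l(1) by (rule sum.remove)
    also have "(\<Sum>i\<in>tH - {l}. thF i) = S" unfolding S_def by (rule sum.cong) (auto simp: thF_def)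
    finally show ?thesis by (simp add: thF_def)
  qed
  have feas: "soma_feasible tau crit T CL CH m k thL thH thF w"
    unfolding soma_feasible_alt[OF tH_def n_def]
  proof (intro conjI)
    show "\<forall>i\<in>tau. crit i = LO \<longrightarrow> thL i = CL i / T i" by (simp add: thL_def tH_def)
    show "\<forall>i\<in>tau. CL i / T i \<le> thL i" using a_props Q1(1) by (auto simp: thL_def)
    show "\<forall>j\<in>{1..n}. (\<Sum>i\<in>tH. thH i j) \<le> real m"
    proof
      fix j assume j: "j \<in> {1..n}"
      have sr: "(\<Sum>i\<in>tH. thH i j) = thH l j + (\<Sum>i\<in>tH - {l}. thH i j)" using finH l(1) by (rule sum.remove)
      show "(\<Sum>i\<in>tH. thH i j) \<le> real m"
      proof (cases "j = n")
        case True
        have "(\<Sum>i\<in>tH - {l}. thH i j) = S" unfolding S_def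
        proof (rule sum.cong)
          fix i assume i: "i \<in> tH - {l}"
          then show "thH i j = M i" using kr[of i] True by (auto simp: thH_def)
        qed simp
        then show ?thesis using sr True Q1(5) l(2) by (simp add: thH_def)
      next
        case False
        then have jn: "j < n" using j by auto
        have "(\<Sum>i\<in>tH - {l}. thH i j) \<le> real (card (tH - {l})) * 1"
          by (rule sum_bounded_above) (auto simp: thH_def M_props)
        also have "real (card (tH - {l})) = real n - 1" using finH l(1) n1 by (simp add: n_def)
        finally show ?thesis using sr jn l(2) by (simp add: thH_def)
      qed
    qed
    show "(\<Sum>i\<in>tH. thF i) \<le> real m" using sumF Q1(5) by simp
    show "\<forall>i\<in>tH. CH i - CL i \<le> (\<Sum>j\<in>{1..<k i}. thH i j * w j)
        + (if k i \<le> n then thH i (k i) else thF i) * (T i - CL i / thL i - (\<Sum>j\<in>{1..<k i}. w j)) \<and>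
        (\<forall>j\<in>{k i..n}. thL i \<le> thH i j) \<and> thL i \<le> thF i"
    proof
      fix i assume i: "i \<in> tH"
      show "CH i - CL i \<le> (\<Sum>j\<in>{1..<k i}. thH i j * w j)
        + (if k i \<le> n then thH i (k i) else thF i) * (T i - CL i / thL i - (\<Sum>j\<in>{1..<k i}. w j)) \<and>
        (\<forall>j\<in>{k i..n}. thL i \<le> thH i j) \<and> thL i \<le> thF i"
      proof (cases "i = l")
        case True
        have "CH l - CL l \<le> Rs * (T l - CL l / xs)"
        proof -
          have eq: "Rs * (T l - CL l / xs) * xs = Rs * (T l * xs - CL l)"
            using xspos by (simp add: field_simps)
          have "(CH l - CL l) * xs \<le> Rs * (T l - CL l / xs) * xs"
            using Q1(6) unfolding eq .
          then show ?thesis using xspos by (simp add: mult_le_cancel_right)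
        qed
        then show ?thesis using True l Q1(2) i by (auto simp: thH_def thF_def thL_def w_def)
      next
        case False
        have ki: "k i < n" using kne[OF i False] .
        have "CH i - CL i \<le> 1 * (T i - CL i / a i)" using a_props[OF i] by simp
        then show ?thesis using False ki i a_props[OF i] M_props[OF i]
          by (auto simp: thH_def thF_def thL_def w_def)
      qed
    qed
    show "\<forall>i\<in>tH. CH i / T i * (\<Sum>j\<in>{1..<k i}. w j) \<le> (\<Sum>j\<in>{1..<k i}. thH i j * w j) \<and>
        (\<forall>j\<in>{1..<k i}. (if j \<le> n then thH i j else thF i) \<le> (if j + 1 \<le> n then thH i (j + 1) else thF i)) \<and>
        (\<forall>j\<in>{k i..n}. CH i / T i \<le> thH i j) \<and> CH i / T i \<le> thF i"
    proof
      fix i assume i: "i \<in> tH"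
      have ch: "(if j \<le> n then thH i j else thF i) \<le> (if j + 1 \<le> n then thH i (j + 1) else thF i)"
        if j: "j \<in> {1..<k i}" for j
      proof -
        have "j + 1 \<le> n" "j \<le> n" using j kr[OF i] by auto
        moreover have "- real n \<le> thH i (j + 1)"
          using M_props[OF i] Rspos n1 by (auto simp: thH_def)
        moreover have "thH i j = - real n" using j by (simp add: thH_def)
        ultimately show ?thesis by simp
      qed
      have u1: "CH i / T i \<le> 1" using CH[OF i] by simp
      show "CH i / T i * (\<Sum>j\<in>{1..<k i}. w j) \<le> (\<Sum>j\<in>{1..<k i}. thH i j * w j) \<and>
        (\<forall>j\<in>{1..<k i}. (if j \<le> n then thH i j else thF i) \<le> (if j + 1 \<le> n then thH i (j + 1) else thF i)) \<and>
        (\<forall>j\<in>{k i..n}. CH i / T i \<le> thH i j) \<and> CH i / T i \<le> thF i"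
        using ch u1 M_props[OF i] Q1(3) by (auto simp: thH_def thF_def w_def)
    qed
    show "\<forall>i\<in>tH. (\<forall>j\<in>{1..n}. thH i j \<le> 1) \<and> thF i \<le> 1"
      using M_props Q1(4) by (auto simp: thH_def thF_def)
    show "\<forall>j\<in>{1..n}. 0 \<le> w j" by (simp add: w_def)
  qed
  have opt: "(\<Sum>i\<in>tH. thL i) \<le> (\<Sum>i\<in>tH. thL' i)"
    if feas': "soma_feasible tau crit T CL CH m k thL' thH' thF' w'" for thL' thH' thF' w'
  proof -
    note q = inQ[OF feas']
    have "xs \<le> thL' l" using xs(2) q by force
    moreover have "(\<Sum>i\<in>tH - {l}. thL i) \<le> (\<Sum>i\<in>tH - {l}. thL' i)"
      using q by (intro sum_mono) (auto simp: thL_def)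
    moreover have "(\<Sum>i\<in>tH. thL i) = thL l + (\<Sum>i\<in>tH - {l}. thL i)" using finH l(1) by (rule sum.remove)
    moreover have "(\<Sum>i\<in>tH. thL' i) = thL' l + (\<Sum>i\<in>tH - {l}. thL' i)" using finH l(1) by (rule sum.remove)
    ultimately show ?thesis using l(1) by (simp add: thL_def)
  qed
  have "(\<Sum>i\<in>tau. thL i) \<le> (\<Sum>i\<in>tau. thL0 i)"
    using feas_LO_sum[OF feas fin] feas_LO_sum[OF feas0 fin] opt[OF feas0] by (simp add: tH_def)
  then show ?thesis using feas opt unfolding tH_def by blast
qed
theorem lemma5:
  fixes tau :: "'a set" and crit :: "'a \<Rightarrow> crit" and T CL CH :: "'a \<Rightarrow> real" and m :: nat
  assumes "finite tau"
    and "\<forall>i\<in>tau. 0 < T i"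
    and "\<forall>i\<in>tau. 0 < CL i \<and> CL i \<le> CH i"
    and "\<forall>i\<in>tau. crit i = LO \<longrightarrow> CH i = CL i"
    and "\<forall>i\<in>tau. CL i / T i \<le> 1 \<and> CH i / T i \<le> 1"
    and "MC_schedulable tau crit T CL CH m"
  shows "soma_success tau crit T CL CH m (4/3)"
proof -
  note fin = assms(1) and Tpos = assms(2) and C = assms(3) and U = assms(5)
  have U1: "(\<Sum>i\<in>tau. CL i / T i) \<le> real m"
    and U2: "(\<Sum>i\<in>{i\<in>tau. crit i = HI}. CH i / T i) \<le> real m"
    using mc_necessary[OF fin Tpos C assms(6)] by auto
  show ?thesis unfolding soma_success_def Let_def
  proof (intro allI impI)
    fix k assume ord: "soma_order tau crit T (\<lambda>i. CL i / (4/3)) (\<lambda>i. CH i / (4/3)) k"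
    have bij: "bij_betw k {i\<in>tau. crit i = HI} {1..card {i\<in>tau. crit i = HI}}"
      using ord unfolding soma_order_def Let_def by blast
    have kr: "\<forall>i\<in>{i\<in>tau. crit i = HI}. 1 \<le> k i \<and> k i \<le> card {i\<in>tau. crit i = HI}"
      using bij by (auto simp: bij_betw_def)
    obtain thL0 thH0 thF0 w0 where
      P0: "soma_feasible tau crit T (\<lambda>i. CL i / (4/3)) (\<lambda>i. CH i / (4/3)) m k thL0 thH0 thF0 w0"
          "(\<Sum>i\<in>tau. thL0 i) \<le> real m"
      using soma_P0[OF fin Tpos C _ kr U1 U2] U by blast
    have C': "\<forall>i\<in>{i\<in>tau. crit i = HI}. 0 < CL i / (4/3) \<and> CL i / (4/3) \<le> CH i / (4/3) \<and> CH i / (4/3) \<le> T i"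
    proof
      fix i assume i: "i \<in> {i\<in>tau. crit i = HI}"
      then have "0 < CL i" "CL i \<le> CH i" "CH i / T i \<le> 1" "0 < T i" using C U Tpos by auto
      then show "0 < CL i / (4/3) \<and> CL i / (4/3) \<le> CH i / (4/3) \<and> CH i / (4/3) \<le> T i"
        by (auto simp: divide_le_eq)
    qed
    obtain thL thH thF w where
      M: "soma_feasible tau crit T (\<lambda>i. CL i / (4/3)) (\<lambda>i. CH i / (4/3)) m k thL thH thF w"
         "\<forall>thL' thH' thF' w'. soma_feasible tau crit T (\<lambda>i. CL i / (4/3)) (\<lambda>i. CH i / (4/3)) m k thL' thH' thF' w' \<longrightarrow>
          (\<Sum>i\<in>{i\<in>tau. crit i = HI}. thL i) \<le> (\<Sum>i\<in>{i\<in>tau. crit i = HI}. thL' i)"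
         "(\<Sum>i\<in>tau. thL i) \<le> (\<Sum>i\<in>tau. thL0 i)"
      using soma_min[where CL="\<lambda>i. CL i / (4/3)" and CH="\<lambda>i. CH i / (4/3)", OF fin Tpos _ bij P0(1)] C'
      by auto
    show "soma_success_with tau crit T (\<lambda>i. CL i / (4/3)) (\<lambda>i. CH i / (4/3)) m k"
      unfolding soma_success_with_def Let_def
      using M P0(2) by (intro exI[of _ thL] exI[of _ thH] exI[of _ thF] exI[of _ w]) auto
  qed
qed

end
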